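(* Let $\mathfrak{G}$ be a non-redundant assembly graph. Then for every circuit $C$ of $\mathfrak{G}$ and every vertex $v$ of $\mathfrak{G}$, the number of occurrences of $v$ in $C$ equals the number of occurrences of $Label(v)$ in the cyclic string $Label(C)$.
   Context: All strings are over a fixed finite alphabet $\Sigma$. A cyclic string is a bi-infinite periodic word $\mathbb{Z}\to\Sigma$, considered up to shifting indices; its period is its least period $d\ge 1$. For a nonempty finite string $x$, $\langle x\rangle$ denotes the cyclic string obtained by repeating $x$ infinitely in both directions. A finite string $t$ is a substring of a cyclic string $c$ of period $d$ if it appears as a contiguous block of $c$; its number of occurrences in $c$ is the number of starting positions modulo $d$ at which it appears. A string $u$ is a proper infix of $w$ if $w=aub$ with $a,b$ nonempty. An abstract assembly graph is a finite directed multigraph in which each vertex and edge carries a label (a finite or cyclic string) such that for every edge $e$ from $u$ to $v$, $Label(u)$ is a prefix and $Label(v)$ is a suffix of $Label(e)$. An edge $e$ from $u$ to $v$ is a prefix edge if $Label(e)=Label(v)$ and a suffix edge if $Label(e)=Label(u)$. An assembly graph is an abstract assembly graph in which every vertex and edge lies on a directed cycle and no edge is both a prefix and a suffix edge. The label of a walk $v_0,e_1,v_1,\dots,e_n,v_n$ is $Label(e_1)$ followed, for $i=2,\dots,n$, by $Label(e_i)$ with its first $|Label(v_{i-1})|$ characters removed (consecutive edge labels overlap in the intermediate vertex label); a walk with no edges has the label of its vertex. A circuit is a closed walk ($v_n=v_0$), considered up to rotation and required to be primitive (not a repetition of a shorter closed walk); writing the walk label as $Label(v_0)\,x$, the label of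 the circuit is the cyclic string $\langle x\rangle$. The number of occurrences of a vertex $v$ in a circuit is the number of indices $i\in\{1,\dots,n\}$ with $v_i=v$. A walk $P$ is an inner subwalk of a walk $Q$ if $Q=APB$ for walks $A,B$ each containing at least one edge. An assembly graph is non-redundant if whenever $P,Q$ are walks with $Label(P)$ a proper infix of $Label(Q)$, $P$ occurs as an inner subwalk of $Q$. *)

theory Defs
  imports "HOL-Library.Sublist"
begin

record ('v, 'e, 'a) agraph =
  verts :: "'v set"
  arcs  :: "'e set"
  src   :: "'e \<Rightarrow> 'v"
  tgt   :: "'e \<Rightarrow> 'v"
  vlab  :: "'v \<Rightarrow> 'a list"
  elab  :: "'e \<Rightarrow> 'a list"

definition abstract_assembly_graph :: "('v, 'e, 'a::finite) agraph \<Rightarrow> bool" where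
  "abstract_assembly_graph G \<longleftrightarrow>
     finite (verts G) \<and> finite (arcs G) \<and>
     (\<forall>e\<in>arcs G. src G e \<in> verts G \<and> tgt G e \<in> verts G \<and>
        prefix (vlab G (src G e)) (elab G e) \<and> suffix (vlab G (tgt G e)) (elab G e))"

text \<open>A walk v0, e1, v1, ..., en, vn is represented by its start vertex v0 and
  its edge list [e1, ..., en]; the vertex v_i (i \<ge> 1) is the target of e_i.\<close>

definition is_walk :: "('v, 'e, 'a) agraph \<Rightarrow> 'v \<Rightarrow> 'e list \<Rightarrow> bool" where
  "is_walk G v0 es \<longleftrightarrow>
     v0 \<in> verts G \<and> set es \<subseteq> arcs G \<and>
     (es \<noteq> [] \<longrightarrow> src G (hd es) = v0) \<and>
     (\<forall>i. Suc i < length es \<longrightarrow> tgt G (es ! i) = src G (es ! Suc i))"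

definition walk_end :: "('v, 'e, 'a) agraph \<Rightarrow> 'v \<Rightarrow> 'e list \<Rightarrow> 'v" where
  "walk_end G v0 es = (if es = [] then v0 else tgt G (last es))"

definition walk_vertices :: "('v, 'e, 'a) agraph \<Rightarrow> 'v \<Rightarrow> 'e list \<Rightarrow> 'v list" where
  "walk_vertices G v0 es = v0 # map (tgt G) es"

definition walk_label :: "('v, 'e, 'a) agraph \<Rightarrow> 'v \<Rightarrow> 'e list \<Rightarrow> 'a list" where
  "walk_label G v0 es =
     (if es = [] then vlab G v0
      else elab G (hd es) @
           concat (map (\<lambda>e. drop (length (vlab G (src G e))) (elab G e)) (tl es)))"

definition closed_walk :: "('v, 'e, 'a) agraph \<Rightarrow> 'v \<Rightarrow> 'e list \<Rightarrow> bool" where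
  "closed_walk G v0 es \<longleftrightarrow> is_walk G v0 es \<and> walk_end G v0 es = v0"

definition directed_cycle :: "('v, 'e, 'a) agraph \<Rightarrow> 'v \<Rightarrow> 'e list \<Rightarrow> bool" where
  "directed_cycle G v0 es \<longleftrightarrow>
     closed_walk G v0 es \<and> es \<noteq> [] \<and> distinct (map (tgt G) es)"

definition prefix_edge :: "('v, 'e, 'a) agraph \<Rightarrow> 'e \<Rightarrow> bool" where
  "prefix_edge G e \<longleftrightarrow> elab G e = vlab G (tgt G e)"

definition suffix_edge :: "('v, 'e, 'a) agraph \<Rightarrow> 'e \<Rightarrow> bool" where
  "suffix_edge G e \<longleftrightarrow> elab G e = vlab G (src G e)"

definition assembly_graph :: "('v, 'e, 'a::finite) agraph \<Rightarrow> bool" where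
  "assembly_graph G \<longleftrightarrow>
     abstract_assembly_graph G \<and>
     (\<forall>v\<in>verts G. \<exists>v0 es. directed_cycle G v0 es \<and> v \<in> set (walk_vertices G v0 es)) \<and>
     (\<forall>e\<in>arcs G. \<exists>v0 es. directed_cycle G v0 es \<and> e \<in> set es) \<and>
     (\<forall>e\<in>arcs G. \<not> (prefix_edge G e \<and> suffix_edge G e))"

definition proper_infix :: "'a list \<Rightarrow> 'a list \<Rightarrow> bool" where
  "proper_infix u w \<longleftrightarrow> (\<exists>a b. a \<noteq> [] \<and> b \<noteq> [] \<and> w = a @ u @ b)"

definition inner_subwalk ::
  "('v, 'e, 'a) agraph \<Rightarrow> 'v \<Rightarrow> 'e list \<Rightarrow> 'v \<Rightarrow> 'e list \<Rightarrow> bool" where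
  "inner_subwalk G p0 ps q0 qs \<longleftrightarrow>
     (\<exists>as bs. as \<noteq> [] \<and> bs \<noteq> [] \<and> qs = as @ ps @ bs \<and> tgt G (last as) = p0)"

definition non_redundant :: "('v, 'e, 'a::finite) agraph \<Rightarrow> bool" where
  "non_redundant G \<longleftrightarrow>
     assembly_graph G \<and>
     (\<forall>p0 ps q0 qs. is_walk G p0 ps \<and> is_walk G q0 qs \<and>
        proper_infix (walk_label G p0 ps) (walk_label G q0 qs) \<longrightarrow>
        inner_subwalk G p0 ps q0 qs)"

text \<open>Circuits: primitive closed walks with at least one edge (rotations are
  just different representatives).\<close>

definition primitive_list :: "'e list \<Rightarrow> bool" where
  "primitive_list es \<longleftrightarrow> (\<forall>k ys. es = concat (replicate k ys) \<longrightarrow> k = 1)"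

definition is_circuit :: "('v, 'e, 'a) agraph \<Rightarrow> 'v \<Rightarrow> 'e list \<Rightarrow> bool" where
  "is_circuit G v0 es \<longleftrightarrow> closed_walk G v0 es \<and> es \<noteq> [] \<and> primitive_list es"

text \<open>Writing the walk label as Label(v0) x, the circuit label is the cyclic
  string <x>; we represent it by the finite word x.\<close>

definition circuit_word :: "('v, 'e, 'a) agraph \<Rightarrow> 'v \<Rightarrow> 'e list \<Rightarrow> 'a list" where
  "circuit_word G v0 es = drop (length (vlab G v0)) (walk_label G v0 es)"

text \<open>Cyclic string <x>: position i (i in Z, represented on nat by periodicity)
  carries x ! (i mod |x|).\<close>

definition cyc_word :: "'a list \<Rightarrow> nat \<Rightarrow> 'a" where
  "cyc_word x i = x ! (i mod length x)"

definition cyc_period :: "'a list \<Rightarrow> nat" where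
  "cyc_period x = (LEAST d. d \<ge> 1 \<and> (\<forall>i. cyc_word x (i + d) = cyc_word x i))"

definition cyc_occurrences :: "'a list \<Rightarrow> 'a list \<Rightarrow> nat" where
  "cyc_occurrences t x =
     card {i. i < cyc_period x \<and> (\<forall>j < length t. cyc_word x (i + j) = t ! j)}"

definition vertex_occurrences :: "('v, 'e, 'a) agraph \<Rightarrow> 'v \<Rightarrow> 'e list \<Rightarrow> 'v \<Rightarrow> nat" where
  "vertex_occurrences G v0 es v = length (filter (\<lambda>e. tgt G e = v) es)"

end

theory Submission
  imports Defs
begin


lemma aag_wf: "abstract_assembly_graph G \<Longrightarrow> e \<in> arcs G \<Longrightarrow> tgt G e \<in> verts G \<and> src G e \<in> verts G
   \<and> prefix (vlab G (src G e)) (elab G e) \<and> suffix (vlab G (tgt G e)) (elab G e)"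
  by (auto simp: abstract_assembly_graph_def)

lemma walk_Nil[simp]: "is_walk G v [] \<longleftrightarrow> v \<in> verts G" by (simp add: is_walk_def)

lemma walk_Cons:
  assumes wf: "abstract_assembly_graph G"
  shows "is_walk G v (e # es) \<longleftrightarrow> v \<in> verts G \<and> e \<in> arcs G \<and> src G e = v \<and> is_walk G (tgt G e) es"
proof
  assume w: "is_walk G v (e # es)"
  have c: "\<And>i. Suc i < Suc (length es) \<Longrightarrow> tgt G ((e#es) ! i) = src G ((e#es) ! Suc i)"
    using w by (auto simp: is_walk_def)
  have "\<And>i. Suc i < length es \<Longrightarrow> tgt G (es ! i) = src G (es ! Suc i)"
    using c[of "Suc i" for i] by auto
  moreover have "es \<noteq> [] \<Longrightarrow> src G (hd es) = tgt G e"
    using c[of 0] by (cases es) auto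
  moreover have "tgt G e \<in> verts G" using w aag_wf[OF wf, of e] by (auto simp: is_walk_def)
  ultimately show "v \<in> verts G \<and> e \<in> arcs G \<and> src G e = v \<and> is_walk G (tgt G e) es"
    using w by (auto simp: is_walk_def)
next
  assume a: "v \<in> verts G \<and> e \<in> arcs G \<and> src G e = v \<and> is_walk G (tgt G e) es"
  have "tgt G ((e#es) ! i) = src G ((e#es) ! Suc i)" if "Suc i < length (e#es)" for i
  proof (cases i)
    case 0 then show ?thesis using a that by (cases es) (auto simp: is_walk_def)
  next
    case (Suc j) then show ?thesis using a that by (auto simp: is_walk_def)
  qed
  then show "is_walk G v (e # es)" using a by (auto simp: is_walk_def)
qed

lemma walk_end_Nil[simp]: "walk_end G v [] = v" by (simp add: walk_end_def)
lemma walk_end_Cons[simp]: "walk_end G v (e # es) = walk_end G (tgt G e) es"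
  by (simp add: walk_end_def)
lemma walk_end_append: "walk_end G v (as @ bs) = walk_end G (walk_end G v as) bs"
  by (induction as arbitrary: v) auto
lemma walk_end_snoc: "walk_end G v (as @ [e]) = tgt G e"
  by (simp add: walk_end_append)

lemma walk_verts: "is_walk G v es \<Longrightarrow> v \<in> verts G" by (simp add: is_walk_def)

lemma walk_append:
  assumes wf: "abstract_assembly_graph G"
  shows "is_walk G v (as @ bs) \<longleftrightarrow> is_walk G v as \<and> is_walk G (walk_end G v as) bs"
proof (induction as arbitrary: v)
  case Nil then show ?case using walk_verts by auto
next
  case (Cons a as) then show ?case using walk_Cons[OF wf] by auto
qed

lemma walk_end_in: "abstract_assembly_graph G \<Longrightarrow> is_walk G v es \<Longrightarrow> walk_end G v es \<in> verts G"
  using walk_append[of G v es "[]"] by auto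

lemma walk_label_Nil[simp]: "walk_label G v [] = vlab G v" by (simp add: walk_label_def)

lemma walk_label_snoc:
  assumes wf: "abstract_assembly_graph G" and w: "is_walk G v (xs @ [e])"
  shows "walk_label G v (xs @ [e]) = walk_label G v xs @ drop (length (vlab G (walk_end G v xs))) (elab G e)"
proof (cases xs)
  case Nil
  with w wf have "src G e = v" "e \<in> arcs G" by (auto simp: walk_Cons)
  then have "prefix (vlab G v) (elab G e)" using aag_wf[OF wf] by auto
  then show ?thesis using Nil by (auto simp: walk_label_def prefix_def)
next
  case (Cons a ys)
  from w wf have "is_walk G (walk_end G v xs) [e]" by (simp add: walk_append)
  then have "src G e = walk_end G v xs" using wf by (simp add: walk_Cons)
  then show ?thesis using Cons by (simp add: walk_label_def)
qed

lemma walk_label_prefix: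
  assumes wf: "abstract_assembly_graph G" and w: "is_walk G v xs"
  shows "prefix (vlab G v) (walk_label G v xs)"
proof (cases xs)
  case Nil then show ?thesis by simp
next
  case (Cons e ys)
  with w wf have "src G e = v" "e \<in> arcs G" by (auto simp: walk_Cons)
  then have "prefix (vlab G v) (elab G e)" using aag_wf[OF wf] by auto
  then show ?thesis using Cons by (auto simp: walk_label_def prefix_def)
qed

lemma walk_label_suffix:
  assumes wf: "abstract_assembly_graph G"
  shows "is_walk G v xs \<Longrightarrow> suffix (vlab G (walk_end G v xs)) (walk_label G v xs)"
proof (induction xs rule: rev_induct)
  case Nil then show ?case by simp
next
  case (snoc e xs)
  have w: "is_walk G v xs" and we: "is_walk G (walk_end G v xs) [e]"
    using snoc.prems wf by (auto simp: walk_append)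
  then have se: "src G e = walk_end G v xs" and ea: "e \<in> arcs G" using wf by (auto simp: walk_Cons)
  have IH: "suffix (vlab G (src G e)) (walk_label G v xs)" using snoc.IH w se by simp
  then obtain W0 where W0: "walk_label G v xs = W0 @ vlab G (src G e)" by (auto simp: suffix_def)
  have p: "prefix (vlab G (src G e)) (elab G e)" and s: "suffix (vlab G (tgt G e)) (elab G e)"
    using aag_wf[OF wf ea] by auto
  have "walk_label G v (xs @ [e]) = W0 @ elab G e"
    using walk_label_snoc[OF wf snoc.prems] W0 se p by (auto simp: prefix_def)
  then show ?case using s by (simp add: walk_end_snoc suffix_appendI)
qed

lemma walk_label_append:
  assumes wf: "abstract_assembly_graph G"
  shows "is_walk G v (as @ bs) \<Longrightarrow> walk_label G v (as @ bs) = walk_label G v as @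
     drop (length (vlab G (walk_end G v as))) (walk_label G (walk_end G v as) bs)"
proof (induction bs rule: rev_induct)
  case Nil then show ?case by simp
next
  case (snoc e bs)
  let ?w = "walk_end G v as"
  have w0: "is_walk G v (as @ (bs @ [e]))" using snoc.prems by simp
  have w1: "is_walk G v (as @ bs)" using walk_append[OF wf, of v "as @ bs" "[e]"] snoc.prems by simp
  have w2: "is_walk G ?w (bs @ [e])" using walk_append[OF wf, of v as "bs @ [e]"] w0 by simp
  have w3: "is_walk G ?w bs" using walk_append[OF wf, of ?w bs "[e]"] w2 by simp
  have "walk_label G v (as @ bs @ [e]) = walk_label G v (as @ bs) @ drop (length (vlab G (walk_end G v (as @ bs)))) (elab G e)"
    using walk_label_snoc[OF wf, of v "as @ bs" e] snoc.prems by simp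
  moreover have "walk_label G ?w (bs @ [e]) = walk_label G ?w bs @ drop (length (vlab G (walk_end G ?w bs))) (elab G e)"
    using walk_label_snoc[OF wf w2] .
  moreover have "length (vlab G ?w) \<le> length (walk_label G ?w bs)"
    using walk_label_prefix[OF wf w3] prefix_length_le by blast
  moreover have "walk_end G v (as @ bs) = walk_end G ?w bs" by (rule walk_end_append)
  moreover note IH = snoc.IH[OF w1]
  ultimately show ?case by simp
qed



definition "wl G q0 qs k = walk_label G q0 (take k qs)"
definition "vx G q0 qs k = walk_end G q0 (take k qs)"
definition "ep G q0 qs k = length (wl G q0 qs k)"
definition "sp G q0 qs k = ep G q0 qs k - length (vlab G (vx G q0 qs k))"

lemma walk_take:
  assumes wf: "abstract_assembly_graph G" and w: "is_walk G q0 qs"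
  shows "is_walk G q0 (take k qs)"
  using walk_append[OF wf, of q0 "take k qs" "drop k qs"] w by simp

lemma walk_window:
  assumes wf: "abstract_assembly_graph G" and w: "is_walk G q0 qs" and ij: "i \<le> j"
  shows "is_walk G (vx G q0 qs i) (drop i (take j qs))"
proof -
  have "take j qs = take i qs @ drop i (take j qs)"
    using ij by (metis append_take_drop_id min.absorb1 take_take)
  then show ?thesis using walk_take[OF wf w, of j] walk_append[OF wf, of q0 "take i qs" "drop i (take j qs)"]
    by (simp add: vx_def)
qed

lemma wl_split:
  assumes wf: "abstract_assembly_graph G" and w: "is_walk G q0 qs" and ij: "i \<le> j"
  shows "wl G q0 qs j = wl G q0 qs i @ drop (length (vlab G (vx G q0 qs i)))
            (walk_label G (vx G q0 qs i) (drop i (take j qs)))"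
proof -
  have e: "take j qs = take i qs @ drop i (take j qs)"
    using ij by (metis append_take_drop_id min.absorb1 take_take)
  have "is_walk G q0 (take i qs @ drop i (take j qs))" using walk_take[OF wf w, of j] e by simp
  from walk_label_append[OF wf this] show ?thesis unfolding wl_def vx_def using e by simp
qed

lemma wl_prefix:
  assumes wf: "abstract_assembly_graph G" and w: "is_walk G q0 qs" and ij: "i \<le> j"
  shows "prefix (wl G q0 qs i) (wl G q0 qs j)"
  using wl_split[OF assms] by (simp add: prefixI)

lemma ep_mono:
  assumes wf: "abstract_assembly_graph G" and w: "is_walk G q0 qs" and ij: "i \<le> j"
  shows "ep G q0 qs i \<le> ep G q0 qs j"
  using wl_prefix[OF assms] prefix_length_le unfolding ep_def by blast

lemma wl_full: "length qs \<le> k \<Longrightarrow> wl G q0 qs k = walk_label G q0 qs"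
  by (simp add: wl_def)

lemma wl_prefix_T:
  assumes wf: "abstract_assembly_graph G" and w: "is_walk G q0 qs"
  shows "prefix (wl G q0 qs i) (walk_label G q0 qs)"
proof (cases "i \<le> length qs")
  case True then show ?thesis using wl_prefix[OF wf w True] wl_full[of qs "length qs" G q0] by simp
next
  case False then show ?thesis using wl_full[of qs i G q0] by simp
qed

lemma vx_suffix:
  assumes wf: "abstract_assembly_graph G" and w: "is_walk G q0 qs"
  shows "wl G q0 qs k = take (sp G q0 qs k) (wl G q0 qs k) @ vlab G (vx G q0 qs k)"
    and "length (vlab G (vx G q0 qs k)) \<le> ep G q0 qs k"
proof -
  have "suffix (vlab G (vx G q0 qs k)) (wl G q0 qs k)"
    using walk_label_suffix[OF wf walk_take[OF wf w]] by (simp add: wl_def vx_def)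
  then obtain A where A: "wl G q0 qs k = A @ vlab G (vx G q0 qs k)" by (auto simp: suffix_def)
  then show "wl G q0 qs k = take (sp G q0 qs k) (wl G q0 qs k) @ vlab G (vx G q0 qs k)"
    by (simp add: sp_def ep_def)
  show "length (vlab G (vx G q0 qs k)) \<le> ep G q0 qs k" using A by (simp add: ep_def)
qed

lemma T_split:
  assumes "prefix W T"
  shows "take (length W) T = W"
  using assms by (auto simp: prefix_def)

lemma window_label:
  assumes wf: "abstract_assembly_graph G" and w: "is_walk G q0 qs" and ij: "i \<le> j"
  shows "walk_label G (vx G q0 qs i) (drop i (take j qs)) =
           take (ep G q0 qs j - sp G q0 qs i) (drop (sp G q0 qs i) (walk_label G q0 qs))"
    and "sp G q0 qs i \<le> ep G q0 qs j"
proof -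
  let ?WD = "walk_label G (vx G q0 qs i) (drop i (take j qs))"
  let ?u = "vlab G (vx G q0 qs i)"
  let ?A0 = "take (sp G q0 qs i) (wl G q0 qs i)"
  have "prefix ?u ?WD" using walk_label_prefix[OF wf walk_window[OF wf w ij]] .
  then obtain R where R: "?WD = ?u @ R" by (auto simp: prefix_def)
  have "wl G q0 qs j = wl G q0 qs i @ R" using wl_split[OF wf w ij] R by simp
  also have "\<dots> = ?A0 @ ?WD" using vx_suffix(1)[OF wf w, of i] R by (metis append_assoc)
  finally have wj: "wl G q0 qs j = ?A0 @ ?WD" .
  have lA: "length ?A0 = sp G q0 qs i"
    using vx_suffix[OF wf w, of i] by (simp add: sp_def ep_def)
  obtain Z where Z: "walk_label G q0 qs = wl G q0 qs j @ Z"
    using wl_prefix_T[OF wf w, of j] by (auto simp: prefix_def)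
  have lW: "length ?WD = ep G q0 qs j - sp G q0 qs i" using wj lA by (simp add: ep_def)
  show "?WD = take (ep G q0 qs j - sp G q0 qs i) (drop (sp G q0 qs i) (walk_label G q0 qs))"
    using Z wj lA lW by simp
  show "sp G q0 qs i \<le> ep G q0 qs j" using wj lA by (simp add: ep_def)
qed

lemma vertex_label_pos:
  assumes wf: "abstract_assembly_graph G" and w: "is_walk G q0 qs"
  shows "take (length (vlab G (vx G q0 qs k))) (drop (sp G q0 qs k) (walk_label G q0 qs)) = vlab G (vx G q0 qs k)"
    and "sp G q0 qs k + length (vlab G (vx G q0 qs k)) = ep G q0 qs k"
proof -
  have "walk_label G (vx G q0 qs k) (drop k (take k qs)) = vlab G (vx G q0 qs k)" by simp
  with window_label[OF wf w, of k k] vx_suffix(2)[OF wf w, of k]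
  show "take (length (vlab G (vx G q0 qs k))) (drop (sp G q0 qs k) (walk_label G q0 qs)) = vlab G (vx G q0 qs k)"
    by (simp add: sp_def)
  show "sp G q0 qs k + length (vlab G (vx G q0 qs k)) = ep G q0 qs k"
    using vx_suffix(2)[OF wf w, of k] by (simp add: sp_def)
qed

lemma step_facts:
  assumes wf: "abstract_assembly_graph G" and w: "is_walk G q0 qs" and k: "k < length qs"
  shows "wl G q0 qs (Suc k) = wl G q0 qs k @ drop (length (vlab G (vx G q0 qs k))) (elab G (qs ! k))"
    and "src G (qs ! k) = vx G q0 qs k" and "vx G q0 qs (Suc k) = tgt G (qs ! k)"
    and "qs ! k \<in> arcs G"
proof -
  have t: "take (Suc k) qs = take k qs @ [qs ! k]" using k by (simp add: take_Suc_conv_app_nth)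
  have ws: "is_walk G q0 (take k qs @ [qs ! k])" using walk_take[OF wf w, of "Suc k"] t by simp
  show "wl G q0 qs (Suc k) = wl G q0 qs k @ drop (length (vlab G (vx G q0 qs k))) (elab G (qs ! k))"
    using walk_label_snoc[OF wf ws] t by (simp add: wl_def vx_def)
  have "is_walk G (vx G q0 qs k) [qs ! k]" using ws walk_append[OF wf] by (simp add: vx_def)
  then show "src G (qs ! k) = vx G q0 qs k" "qs ! k \<in> arcs G" using walk_Cons[OF wf] by auto
  show "vx G q0 qs (Suc k) = tgt G (qs ! k)" using t by (simp add: vx_def walk_end_snoc)
qed

lemma sp_step:
  assumes wf: "abstract_assembly_graph G" and w: "is_walk G q0 qs" and k: "k < length qs"
  shows "sp G q0 qs k \<le> sp G q0 qs (Suc k)"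
    and "sp G q0 qs k = sp G q0 qs (Suc k) \<Longrightarrow> ep G q0 qs k = ep G q0 qs (Suc k) \<Longrightarrow>
          prefix_edge G (qs ! k) \<and> suffix_edge G (qs ! k)"
proof -
  let ?e = "qs ! k"
  note sf = step_facts[OF wf w k]
  have p: "prefix (vlab G (src G ?e)) (elab G ?e)" and s: "suffix (vlab G (tgt G ?e)) (elab G ?e)"
    using aag_wf[OF wf sf(4)] by auto
  have lp: "length (vlab G (vx G q0 qs k)) \<le> length (elab G ?e)" using p sf(2) prefix_length_le by fastforce
  have ls: "length (vlab G (tgt G ?e)) \<le> length (elab G ?e)" using s suffix_length_le by blast
  have E: "ep G q0 qs (Suc k) + length (vlab G (vx G q0 qs k)) = ep G q0 qs k + length (elab G ?e)"
    using sf(1) lp by (simp add: ep_def)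
  have V1: "length (vlab G (vx G q0 qs k)) \<le> ep G q0 qs k" using vx_suffix(2)[OF wf w] .
  have V2: "length (vlab G (tgt G ?e)) \<le> ep G q0 qs (Suc k)" using vx_suffix(2)[OF wf w, of "Suc k"] sf(3) by simp
  show "sp G q0 qs k \<le> sp G q0 qs (Suc k)"
    using E V1 V2 ls sf(3) by (simp add: sp_def)
  assume a1: "sp G q0 qs k = sp G q0 qs (Suc k)" and a2: "ep G q0 qs k = ep G q0 qs (Suc k)"
  have l1: "length (elab G ?e) = length (vlab G (src G ?e))" using E a2 sf(2) by simp
  have l2: "length (vlab G (tgt G ?e)) = length (vlab G (src G ?e))"
    using a1 a2 V1 V2 sf(2,3) by (simp add: sp_def)
  have "elab G ?e = vlab G (src G ?e)" using p l1 by (auto simp: prefix_def)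
  moreover have "elab G ?e = vlab G (tgt G ?e)" using s l1 l2 by (auto simp: suffix_def)
  ultimately show "prefix_edge G ?e \<and> suffix_edge G ?e" by (simp add: prefix_edge_def suffix_edge_def)
qed



lemma sp_mono:
  assumes wf: "abstract_assembly_graph G" and w: "is_walk G q0 qs"
  shows "i \<le> j \<Longrightarrow> j \<le> length qs \<Longrightarrow> sp G q0 qs i \<le> sp G q0 qs j"
proof (induction j)
  case 0 then show ?case by simp
next
  case (Suc j)
  show ?case
  proof (cases "i = Suc j")
    case True then show ?thesis by simp
  next
    case False
    then have "sp G q0 qs i \<le> sp G q0 qs j" using Suc by simp
    also have "\<dots> \<le> sp G q0 qs (Suc j)" using sp_step(1)[OF wf w] Suc.prems by simp
    finally show ?thesis .
  qed
qed

lemma no_zero_progress: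
  assumes ag: "assembly_graph G" and w: "is_walk G q0 qs"
    and ij: "i < j" "j \<le> length qs"
    and eqs: "sp G q0 qs i = sp G q0 qs j" and eqe: "ep G q0 qs i = ep G q0 qs j"
  shows False
proof -
  have wf: "abstract_assembly_graph G" using ag by (simp add: assembly_graph_def)
  have il: "i < length qs" using ij by simp
  have "sp G q0 qs i \<le> sp G q0 qs (Suc i)" "sp G q0 qs (Suc i) \<le> sp G q0 qs j"
    using sp_mono[OF wf w] ij by auto
  then have s1: "sp G q0 qs i = sp G q0 qs (Suc i)" using eqs by simp
  have "ep G q0 qs i \<le> ep G q0 qs (Suc i)" "ep G q0 qs (Suc i) \<le> ep G q0 qs j"
    using ep_mono[OF wf w] ij by auto
  then have e1: "ep G q0 qs i = ep G q0 qs (Suc i)" using eqe by simp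
  have "prefix_edge G (qs ! i) \<and> suffix_edge G (qs ! i)" using sp_step(2)[OF wf w il s1 e1] .
  moreover have "qs ! i \<in> arcs G" using step_facts(4)[OF wf w il] .
  ultimately show False using ag by (auto simp: assembly_graph_def)
qed

lemma sp0: "sp G q0 qs 0 = 0"
  by (simp add: sp_def ep_def wl_def vx_def)

lemma ep_full: "ep G q0 qs (length qs) = length (walk_label G q0 qs)"
  by (simp add: ep_def wl_def)

lemma position:
  assumes nr: "non_redundant G" and w: "is_walk G q0 qs" and wp: "is_walk G p0 ps"
    and s0: "0 < s" and sl: "s + length (walk_label G p0 ps) < length (walk_label G q0 qs)"
    and occ: "take (length (walk_label G p0 ps)) (drop s (walk_label G q0 qs)) = walk_label G p0 ps"
  shows "\<exists>k. k + length ps \<le> length qs \<and> sp G q0 qs k = s \<and> vx G q0 qs k = p0 \<and>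
             take (length ps) (drop k qs) = ps"
proof -
  have ag: "assembly_graph G" using nr by (simp add: non_redundant_def)
  have wf: "abstract_assembly_graph G" using ag by (simp add: assembly_graph_def)
  define T where "T = walk_label G q0 qs"
  define l where "l = walk_label G p0 ps"
  define n where "n = length qs"
  let ?sp = "sp G q0 qs" and ?ep = "ep G q0 qs"
  define i where "i = (GREATEST k. k \<le> n \<and> ?sp k < s)"
  have iP: "i \<le> n \<and> ?sp i < s"
    unfolding i_def by (rule GreatestI_nat[of _ 0 n]) (auto simp: sp0 s0)
  have iG: "k \<le> i" if "k \<le> n" "?sp k < s" for k
    unfolding i_def by (rule Greatest_le_nat[of _ k n]) (use that in auto)
  define j where "j = (LEAST k. i \<le> k \<and> k \<le> n \<and> s + length l < ?ep k)"
  have jP: "i \<le> j \<and> j \<le> n \<and> s + length l < ?ep j"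
    unfolding j_def by (rule LeastI[of _ n]) (use iP sl ep_full[of G q0 qs] in \<open>auto simp: T_def l_def n_def\<close>)
  have jL: "j \<le> k" if "i \<le> k" "k \<le> n" "s + length l < ?ep k" for k
    unfolding j_def by (rule Least_le) (use that in auto)
  define D where "D = drop i (take j qs)"
  have wD: "is_walk G (vx G q0 qs i) D" unfolding D_def using walk_window[OF wf w] jP by simp
  have WD: "walk_label G (vx G q0 qs i) D = take (?ep j - ?sp i) (drop (?sp i) T)"
    unfolding D_def T_def using window_label(1)[OF wf w] jP by simp
  have epT: "?ep j \<le> length T" using ep_mono[OF wf w, of j n] jP ep_full[of G q0 qs] by (simp add: T_def n_def)
  define c where "c = s - ?sp i"
  define m where "m = ?ep j - ?sp i"
  have cm: "c + length l < m" "0 < c" using iP jP by (auto simp: c_def m_def)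
  let ?W = "walk_label G (vx G q0 qs i) D"
  have lW: "length ?W = m" using WD epT iP jP by (simp add: m_def)
  have sc: "c + ?sp i = s" using iP by (simp add: c_def)
  have dW: "drop c ?W = take (m - c) (drop s T)" using WD sc by (simp add: drop_take drop_drop m_def diff_diff_add add.commute)
  have tW: "take (length l) (drop c ?W) = l" proof -
    have "length l \<le> m - c" using cm by simp
    then show ?thesis using dW occ by (simp add: T_def l_def min_def)
  qed
  have Weq1: "drop c ?W = l @ drop (length l) (drop c ?W)"
    using append_take_drop_id[of "length l" "drop c ?W"] tW by simp
  have Weq: "?W = take c ?W @ l @ drop (length l) (drop c ?W)"
    using append_take_drop_id[of c ?W] Weq1 by (metis (no_types))
  have "proper_infix l ?W"
    unfolding proper_infix_def
    apply (rule exI[of _ "take c ?W"], rule exI[of _ "drop (length l) (drop c ?W)"])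
    using Weq lW cm by auto
  then have "inner_subwalk G p0 ps (vx G q0 qs i) D"
    using nr wD wp by (auto simp: non_redundant_def l_def)
  then obtain as bs where ab: "as \<noteq> []" "bs \<noteq> []" "D = as @ ps @ bs" "tgt G (last as) = p0"
    by (auto simp: inner_subwalk_def)
  define k where "k = i + length as"
  have tj: "take j qs = take i qs @ as @ ps @ bs"
  proof -
    have "take j qs = take i (take j qs) @ drop i (take j qs)" by (rule append_take_drop_id[symmetric])
    also have "take i (take j qs) = take i qs" using jP by (simp add: min_def)
    finally show ?thesis using ab(3) by (simp add: D_def)
  qed
  have li: "length (take i qs) = i" using iP by (simp add: n_def)
  have lj: "length (take j qs) = j" using jP by (simp add: n_def)
  have kj: "k + length ps + length bs = j" using tj li lj by (simp add: k_def)
  have tk: "take k qs = take i qs @ as"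
  proof -
    have "take k qs = take k (take j qs)" using kj by simp
    also have "\<dots> = take i qs @ as" using tj li by (simp add: k_def)
    finally show ?thesis .
  qed
  have vk: "vx G q0 qs k = p0"
    using tk ab(1,4) by (simp add: vx_def walk_end_append walk_end_def)
  have tkp: "take (length ps) (drop k qs) = ps"
  proof -
    have "drop k (take j qs) = ps @ bs" using tj li by (simp add: k_def)
    moreover have "drop k (take j qs) = take (j - k) (drop k qs)" by (simp add: drop_take)
    ultimately have "take (length ps) (take (j - k) (drop k qs)) = ps" by simp
    moreover have "length ps \<le> j - k" using kj by simp
    ultimately show ?thesis by (simp add: min_def)
  qed
  define m' where "m' = k + length ps"
  have dkm: "drop k (take m' qs) = ps"
  proof -
    have "take m' qs = take m' (take j qs)" using kj by (simp add: m'_def)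
    also have "\<dots> = take i qs @ as @ ps" using tj li by (simp add: m'_def k_def)
    finally show ?thesis using li by (simp add: k_def)
  qed
  have "\<not> ?sp k < s" using iG[of k] kj jP ab(1) by (auto simp: k_def)
  then have ge: "s \<le> ?sp k" by simp
  have "\<not> s + length l < ?ep m'"
  proof
    assume "s + length l < ?ep m'"
    then have "j \<le> m'" using jL[of m'] kj jP by (auto simp: m'_def k_def)
    moreover have "length bs > 0" using ab(2) by simp
    ultimately show False using kj by (simp add: m'_def)
  qed
  then have le: "?ep m' \<le> s + length l" by simp
  have km: "k \<le> m'" by (simp add: m'_def)
  have WL: "walk_label G (vx G q0 qs k) (drop k (take m' qs)) = take (?ep m' - ?sp k) (drop (?sp k) T)"
    using window_label(1)[OF wf w km] by (simp add: T_def)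
  have spk: "?sp k \<le> ?ep m'" using window_label(2)[OF wf w km] .
  have epm: "?ep m' \<le> length T" using ep_mono[OF wf w, of m' n] kj jP ep_full[of G q0 qs] by (simp add: T_def n_def m'_def)
  have "l = take (?ep m' - ?sp k) (drop (?sp k) T)" using WL dkm vk by (simp add: l_def)
  then have "length l = ?ep m' - ?sp k" using epm spk by simp
  then have "?sp k = s" using ge le spk by simp
  moreover have "k + length ps \<le> length qs" using kj jP by (simp add: n_def)
  ultimately show ?thesis using vk tkp by blast
qed



lemma concat_replicate_nth:
  "i < c * length ys \<Longrightarrow> concat (replicate c ys) ! i = ys ! (i mod length ys)"
proof (induction c arbitrary: i)
  case 0 then show ?case by simp
next
  case (Suc c)
  show ?case
  proof (cases "i < length ys")
    case True then show ?thesis by (simp add: nth_append)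
  next
    case False
    then have "concat (replicate (Suc c) ys) ! i = concat (replicate c ys) ! (i - length ys)"
      by (simp add: nth_append)
    also have "\<dots> = ys ! ((i - length ys) mod length ys)" using Suc False by simp
    also have "(i - length ys) mod length ys = i mod length ys" using False by (simp add: le_mod_geq)
    finally show ?thesis .
  qed
qed

lemma periodic_mult:
  fixes f :: "nat \<Rightarrow> 'b"
  assumes "\<And>t. f (t + p) = f t"
  shows "f (t + a * p) = f t"
proof (induction a arbitrary: t)
  case 0 then show ?case by simp
next
  case (Suc a)
  have "f (t + Suc a * p) = f ((t + a * p) + p)" by (simp add: algebra_simps)
  also have "\<dots> = f (t + a * p)" by (rule assms)
  finally show ?case using Suc by simp
qed

lemma rot_primitive:
  assumes prim: "\<forall>k ys. es = concat (replicate k ys) \<longrightarrow> k = 1"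
    and n: "n = length es" "0 < n"
    and h: "\<forall>t<n. es ! ((k + t) mod n) = es ! t"
  shows "k mod n = 0"
proof (rule ccontr)
  assume nz: "k mod n \<noteq> 0"
  then have k0: "k \<noteq> 0" by (metis mod_0)
  define f where "f t = es ! (t mod n)" for t
  have hk: "f (t + k) = f t" for t
  proof -
    have "(t + k) mod n = (k + t mod n) mod n" by (simp add: mod_add_right_eq add.commute)
    then show ?thesis using h n(2) by (simp add: f_def)
  qed
  have hn: "f (t + n) = f t" for t by (simp add: f_def)
  define g where "g = gcd k n"
  obtain a b where ab: "k * a = n * b + g" using bezout_nat[OF k0, of n] by (auto simp: g_def)
  have hg: "f (t + g) = f t" for t
  proof -
    have "f (t + g) = f (t + g + b * n)" using periodic_mult[of f n, OF hn] by simp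
    also have "t + g + b * n = t + a * k" using ab by (simp add: algebra_simps)
    also have "f (t + a * k) = f t" using periodic_mult[of f k, OF hk] by simp
    finally show ?thesis .
  qed
  have g0: "0 < g" using n(2) by (simp add: g_def)
  have gn: "g dvd n" by (simp add: g_def)
  then have gle: "g \<le> n" using n(2) by (simp add: dvd_imp_le)
  have fm: "f t = f (t mod g)" for t
    using periodic_mult[of f g, OF hg, of "t mod g" "t div g"] by simp
  define c where "c = n div g"
  have cg: "c * g = n" using gn by (simp add: c_def)
  have "es = concat (replicate c (take g es))"
  proof (rule nth_equalityI)
    show "length es = length (concat (replicate c (take g es)))"
      using cg gle n(1) by (simp add: length_concat sum_list_replicate min_def)
  next
    fix i assume i: "i < length es"
    have lt: "length (take g es) = g" using gle n(1) by simp
    have "concat (replicate c (take g es)) ! i = take g es ! (i mod g)"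
      using concat_replicate_nth[of i c "take g es"] lt i cg n(1) by simp
    also have "\<dots> = es ! (i mod g)" using g0 by simp
    also have "\<dots> = f (i mod g)"
    proof -
      have "i mod g < n" using g0 gle by (meson less_le_trans mod_less_divisor)
      then show ?thesis by (simp add: f_def)
    qed
    also have "\<dots> = f i" using fm by simp
    also have "\<dots> = es ! i" using i n(1) by (simp add: f_def)
    finally show "es ! i = concat (replicate c (take g es)) ! i" by simp
  qed
  then have "c = 1" using prim by blast
  then have "g = n" using cg by simp
  then have "n dvd k" by (metis gcd_dvd1 g_def)
  then show False using nz by simp
qed



locale circ_ctx =
  fixes G :: "('v, 'e, 'a::finite) agraph" and v0 :: 'v and es :: "'e list"
  assumes nr: "non_redundant G" and circ: "is_circuit G v0 es"
begin

definition "pre k = map (\<lambda>j. es ! (j mod length es)) [0..<k]"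
abbreviation "x \<equiv> circuit_word G v0 es"
abbreviation "L \<equiv> length (circuit_word G v0 es)"
abbreviation "r \<equiv> length (vlab G v0)"

lemma ag: "assembly_graph G" using nr by (simp add: non_redundant_def)
lemma wf: "abstract_assembly_graph G" using ag by (simp add: assembly_graph_def)
lemma wes: "is_walk G v0 es" and closed: "walk_end G v0 es = v0" and ne: "es \<noteq> []"
  and prim: "primitive_list es"
  using circ by (auto simp: is_circuit_def closed_walk_def)
lemma npos: "0 < length es" using ne by simp

lemma pre_len[simp]: "length (pre k) = k" by (simp add: pre_def)

lemma pre_le: "k \<le> length es \<Longrightarrow> pre k = take k es"
  by (rule nth_equalityI) (auto simp: pre_def nth_take)

lemma pre_shift: "pre (length es + k) = es @ pre k"
proof (rule nth_equalityI)
  fix i assume "i < length (pre (length es + k))"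
  then show "pre (length es + k) ! i = (es @ pre k) ! i"
    by (auto simp: pre_def nth_append le_mod_geq)
qed simp

lemma pre_walk: "is_walk G v0 (pre k)"
proof (induction k rule: less_induct)
  case (less k)
  show ?case
  proof (cases "k \<le> length es")
    case True then show ?thesis using walk_take[OF wf wes] pre_le by simp
  next
    case False
    then have k: "k = length es + (k - length es)" by simp
    have "k - length es < k" using False npos by simp
    then have "is_walk G v0 (pre (k - length es))" by (rule less.IH)
    then have "is_walk G v0 (es @ pre (k - length es))"
      using walk_append[OF wf] wes closed by simp
    then show ?thesis using pre_shift k by metis
  qed
qed

lemma wle: "walk_label G v0 es = vlab G v0 @ x"
proof -
  have "prefix (vlab G v0) (walk_label G v0 es)" using walk_label_prefix[OF wf wes] .
  then show ?thesis by (auto simp: circuit_word_def prefix_def)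
qed

lemma pre_mult: "walk_end G v0 (pre (q * length es)) = v0 \<and>
   walk_label G v0 (pre (q * length es)) = vlab G v0 @ concat (replicate q x)"
proof (induction q)
  case 0 then show ?case by (simp add: pre_def)
next
  case (Suc q)
  have e: "pre (Suc q * length es) = es @ pre (q * length es)"
    using pre_shift[of "q * length es"] by simp
  have w: "is_walk G v0 (es @ pre (q * length es))" using e pre_walk by metis
  show ?case using e walk_label_append[OF wf w] Suc closed wle by (simp add: walk_end_append)
qed

lemma take_pre: "k \<le> N \<Longrightarrow> take k (pre N) = pre k"
  by (simp add: pre_def take_map min_def)

lemma take_drop_pre: "k + a \<le> N \<Longrightarrow> take a (drop k (pre N)) = map (\<lambda>j. es ! (j mod length es)) [k..<k+a]"
  by (simp add: pre_def drop_map take_map min_def)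

lemma vx_pre: "k \<le> N \<Longrightarrow> vx G v0 (pre N) k = walk_end G v0 (pre k)"
  by (simp add: vx_def take_pre)
lemma wl_pre: "k \<le> N \<Longrightarrow> wl G v0 (pre N) k = walk_label G v0 (pre k)"
  by (simp add: wl_def take_pre)
lemma ep_pre: "k \<le> N \<Longrightarrow> ep G v0 (pre N) k = length (walk_label G v0 (pre k))"
  by (simp add: ep_def wl_pre)
lemma sp_pre: "k \<le> N \<Longrightarrow> sp G v0 (pre N) k = length (walk_label G v0 (pre k)) - length (vlab G (walk_end G v0 (pre k)))"
  by (simp add: sp_def ep_pre vx_pre)

lemma shift1: "walk_end G v0 (pre (k + length es)) = walk_end G v0 (pre k) \<and>
   length (walk_label G v0 (pre (k + length es))) = length (walk_label G v0 (pre k)) + L"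
proof -
  have e: "pre (k + length es) = es @ pre k" using pre_shift[of k] by (simp add: add.commute)
  have w: "is_walk G v0 (es @ pre k)" using e pre_walk by metis
  have "r \<le> length (walk_label G v0 (pre k))"
    using walk_label_prefix[OF wf pre_walk[of k]] prefix_length_le by blast
  then show ?thesis using e walk_label_append[OF wf w] closed wle by (simp add: walk_end_append)
qed

lemma shiftq: "walk_end G v0 (pre (k + q * length es)) = walk_end G v0 (pre k) \<and>
   length (walk_label G v0 (pre (k + q * length es))) = length (walk_label G v0 (pre k)) + q * L"
proof (induction q)
  case 0 then show ?case by simp
next
  case (Suc q)
  have e: "k + Suc q * length es = (k + q * length es) + length es" by simp
  show ?case unfolding e using shift1[of "k + q * length es"] Suc by simp
qed

lemma sp_shiftq: "k + q * length es \<le> N \<Longrightarrow>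
   sp G v0 (pre N) (k + q * length es) = sp G v0 (pre N) k + q * L \<and>
   vx G v0 (pre N) (k + q * length es) = vx G v0 (pre N) k"
proof -
  assume a: "k + q * length es \<le> N"
  have "length (vlab G (walk_end G v0 (pre k))) \<le> length (walk_label G v0 (pre k))"
    using walk_label_suffix[OF wf pre_walk[of k]] suffix_length_le by blast
  then show ?thesis using a shiftq[of k q] by (simp add: sp_pre vx_pre)
qed

lemma sp_mult: "q * length es \<le> N \<Longrightarrow> sp G v0 (pre N) (q * length es) = q * L \<and>
    vx G v0 (pre N) (q * length es) = v0 \<and> ep G v0 (pre N) (q * length es) = r + q * L"
  using pre_mult[of q] by (simp add: sp_pre vx_pre ep_pre length_concat sum_list_replicate)

lemma vx_tgt: "1 \<le> k \<Longrightarrow> k \<le> N \<Longrightarrow> vx G v0 (pre N) k = tgt G (es ! ((k - 1) mod length es))"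
proof -
  assume k: "1 \<le> k" "k \<le> N"
  have "pre k = pre (k - 1) @ [es ! ((k - 1) mod length es)]"
    using k(1) by (cases k) (auto simp: pre_def)
  then show ?thesis using k by (simp add: vx_pre walk_end_snoc)
qed

lemma T_nth: "a < m * L \<Longrightarrow> walk_label G v0 (pre (m * length es)) ! (r + a) = x ! (a mod L)"
  using pre_mult[of m] concat_replicate_nth[of a m x] by (simp add: nth_append)

lemma T_len: "length (walk_label G v0 (pre (m * length es))) = r + m * L"
  using pre_mult[of m] by (simp add: length_concat sum_list_replicate)

lemma L_pos: "0 < L"
proof (rule ccontr)
  assume "\<not> 0 < L"
  then have L0: "L = 0" by simp
  let ?N = "1 * length es"
  have "sp G v0 (pre ?N) 0 = sp G v0 (pre ?N) ?N" using sp_mult[of 1 ?N] L0 sp0 by simp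
  moreover have "ep G v0 (pre ?N) 0 = ep G v0 (pre ?N) ?N"
    using sp_mult[of 1 ?N] L0 ep_pre[of 0 ?N] by (simp add: pre_def)
  ultimately show False using no_zero_progress[OF ag pre_walk, of 0 ?N ?N] npos by simp
qed

end



context circ_ctx begin

lemma period_props: "1 \<le> cyc_period x \<and> (\<forall>i. cyc_word x (i + cyc_period x) = cyc_word x i) \<and> cyc_period x \<le> L"
proof -
  have "1 \<le> L" using L_pos by linarith
  moreover have "\<forall>i. cyc_word x (i + L) = cyc_word x i" by (simp add: cyc_word_def)
  ultimately have PL: "1 \<le> L \<and> (\<forall>i. cyc_word x (i + L) = cyc_word x i)" by blast
  show ?thesis unfolding cyc_period_def
    using LeastI[of "\<lambda>d. d \<ge> 1 \<and> (\<forall>i. cyc_word x (i + d) = cyc_word x i)" L, OF PL]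
      Least_le[of "\<lambda>d. d \<ge> 1 \<and> (\<forall>i. cyc_word x (i + d) = cyc_word x i)" L, OF PL] by simp
qed

lemma rL: "r \<le> r * L"
proof -
  have "1 \<le> L" using L_pos by linarith
  then show ?thesis using mult_le_mono2[of 1 L r] by simp
qed

lemma period_eq: "cyc_period x = L"
proof (rule ccontr)
  assume ne': "cyc_period x \<noteq> L"
  define d where "d = cyc_period x"
  have d1: "1 \<le> d" and dp: "\<And>i. cyc_word x (i + d) = cyc_word x i" and dL: "d < L"
    using period_props ne' by (auto simp: d_def)
  define n where "n = length es"
  define N where "N = (r + 3) * n"
  define T where "T = walk_label G v0 (pre N)"
  define l where "l = walk_label G v0 es"
  have ll: "length l = r + L" using wle by (simp add: l_def)
  have TL: "length T = r + (r + 3) * L" using T_len[of "r + 3"] by (simp add: T_def N_def n_def)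
  have Tn: "T ! (r + a) = x ! (a mod L)" if "a < (r + 3) * L" for a
    using T_nth[of a "r + 3"] that by (simp add: T_def N_def n_def)
  define s where "s = r * L + d"
  have rnN: "r * n \<le> N" by (simp add: N_def)
  have sprn: "sp G v0 (pre N) (r * n) = r * L" and vxrn: "vx G v0 (pre N) (r * n) = v0"
    using sp_mult[of r N] rnN by (auto simp: n_def)
  have A: "T ! (r * L + t) = l ! t" if t: "t < r + L" for t
  proof (cases "t < r")
    case True
    have "take r (drop (r * L) T) = vlab G v0"
      using vertex_label_pos(1)[OF wf pre_walk, of N "r * n"] sprn vxrn by (simp add: T_def)
    then have "take r (drop (r * L) T) ! t = vlab G v0 ! t" by simp
    moreover have "r * L + t < length T"
    proof -
      have "r * L \<le> (r + 3) * L" by simp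
      then show ?thesis using True TL by linarith
    qed
    ultimately show ?thesis using True wle by (simp add: l_def nth_append)
  next
    case False
    have e: "r * L + t = r + (r * L + (t - r))" using False rL by simp
    have "r * L + (t - r) < (r + 3) * L" using t False by (simp add: algebra_simps)
    then have "T ! (r * L + t) = x ! ((r * L + (t - r)) mod L)" using e Tn by metis
    also have "(r * L + (t - r)) mod L = (t - r) mod L" by (metis mod_mult_self3)
    also have "(t - r) mod L = t - r" using t False by simp
    finally show ?thesis using False wle by (simp add: l_def nth_append)
  qed
  have B: "T ! (s + t) = T ! (r * L + t)" if t: "t < r + L" for t
  proof -
    have e1: "s + t = r + ((r * L + t - r) + d)" unfolding s_def using rL by linarith
    have e2: "r * L + t = r + (r * L + t - r)" using rL by linarith
    have b1: "(r * L + t - r) + d < (r + 3) * L" using t dL rL by (simp add: algebra_simps)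
    have b2: "r * L + t - r < (r + 3) * L" using b1 by simp
    have "T ! (s + t) = cyc_word x ((r * L + t - r) + d)"
      using e1 Tn[OF b1] by (simp add: cyc_word_def)
    also have "\<dots> = cyc_word x (r * L + t - r)" by (rule dp)
    also have "\<dots> = T ! (r * L + t)" using e2 Tn[OF b2] by (simp add: cyc_word_def)
    finally show ?thesis .
  qed
  have sl: "s + length l < length T" using TL ll dL by (simp add: s_def algebra_simps)
  have occ: "take (length l) (drop s T) = l"
  proof (rule nth_equalityI)
    show "length (take (length l) (drop s T)) = length l" using sl by simp
  next
    fix t assume "t < length (take (length l) (drop s T))"
    then have t: "t < r + L" "s + t < length T" using ll sl by auto
    then have "take (length l) (drop s T) ! t = T ! (s + t)" using ll by simp
    then show "take (length l) (drop s T) ! t = l ! t" using A B t by simp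
  qed
  obtain k where k: "k + length es \<le> length (pre N)" "sp G v0 (pre N) k = s"
      "take (length es) (drop k (pre N)) = es"
    using position[OF nr pre_walk[of N] wes, of s] d1 sl occ by (auto simp: s_def T_def l_def)
  have "map (\<lambda>j. es ! (j mod length es)) [k..<k + length es] = es"
    using k(3) take_drop_pre[of k "length es" N] k(1) by simp
  then have h: "\<forall>t<length es. es ! ((k + t) mod length es) = es ! t"
    by (metis (no_types, lifting) add_diff_cancel_left' length_map length_upt nth_map_upt)
  have "k mod length es = 0" using rot_primitive[OF prim[unfolded primitive_list_def] refl npos h] .
  then have kq: "k = (k div n) * n" using div_mult_mod_eq[of k n] by (simp add: n_def)
  have "sp G v0 (pre N) ((k div n) * n) = (k div n) * L" using sp_mult[of "k div n" N] kq k(1) by (simp add: n_def)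
  then have eq: "(k div n) * L = r * L + d" using k(2) kq s_def by metis
  show False
  proof (cases "k div n \<le> r")
    case True then have "(k div n) * L \<le> r * L" by simp
    then show False using eq d1 by simp
  next
    case False then have "r + 1 \<le> k div n" by simp
    then have "(r + 1) * L \<le> (k div n) * L" by (rule mult_le_mono1)
    then show False using eq dL by simp
  qed
qed

end



context circ_ctx begin

lemma main:
  assumes vV: "v \<in> verts G"
  shows "vertex_occurrences G v0 es v = cyc_occurrences (vlab G v) x"
proof -
  define n where "n = length es"
  define u where "u = vlab G v"
  define M where "M = r + length u + 3"
  define N where "N = M * n"
  define T where "T = walk_label G v0 (pre N)"
  define S where "S = sp G v0 (pre N)"
  define V where "V = vx G v0 (pre N)"
  define Ep where "Ep = ep G v0 (pre N)"
  have n0: "0 < n" using npos by (simp add: n_def)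
  have L1: "1 \<le> L" using L_pos by linarith
  have TL: "length T = r + M * L" using T_len[of M] by (simp add: T_def N_def n_def)
  have Tn: "T ! (r + a) = x ! (a mod L)" if "a < M * L" for a
    using T_nth[of a M] that by (simp add: T_def N_def n_def)
  have wQ: "is_walk G v0 (pre N)" by (rule pre_walk)
  have EpT: "Ep k \<le> length T" if "k \<le> N" for k
    using ep_mono[OF wf wQ that] ep_full[of G v0 "pre N"] by (simp add: Ep_def T_def)
  have SE: "S k + length (vlab G (V k)) = Ep k" for k
    using vertex_label_pos(2)[OF wf wQ] by (simp add: S_def V_def Ep_def)
  have SL: "take (length (vlab G (V k))) (drop (S k) T) = vlab G (V k)" for k
    using vertex_label_pos(1)[OF wf wQ] by (simp add: S_def V_def T_def)
  have Smono: "S i \<le> S j" if "i \<le> j" "j \<le> N" for i j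
    using sp_mono[OF wf wQ, of i j] that by (simp add: S_def)
  have Smult: "S (q * n) = q * L" if "q * n \<le> N" for q
    using sp_mult[of q N] that by (simp add: S_def n_def)
  have Sshift: "S (k + q * n) = S k + q * L \<and> V (k + q * n) = V k" if "k + q * n \<le> N" for k q
    using sp_shiftq[of k q N] that by (simp add: S_def V_def n_def)
  have Vt: "V k = tgt G (es ! ((k - 1) mod n))" if "1 \<le> k" "k \<le> N" for k
    using vx_tgt[OF that] by (simp add: V_def n_def)
  define Vis where "Vis = {k. k < n \<and> tgt G (es ! k) = v}"
  define Occ where "Occ = {i. i < L \<and> (\<forall>j < length u. cyc_word x (i + j) = u ! j)}"
  define f where "f k = (S (r * n + 1 + k) - r) mod L" for k
  have MN: "(r + 2) * n \<le> N" unfolding N_def M_def by (rule mult_le_mono1) simp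
  have K1: "r * n + 1 + k + n \<le> N" if "k < n" for k
  proof -
    have "r * n + 1 + k + n \<le> (r + 2) * n" using that by (simp add: algebra_simps)
    then show ?thesis using MN by linarith
  qed
  have K2: "V (r * n + 1 + k) = tgt G (es ! k)" if "k < n" for k
  proof -
    have "(r * n + 1 + k - 1) mod n = k" using that by simp
    then show ?thesis using Vt[of "r * n + 1 + k"] K1[OF that] by simp
  qed
  have K3: "r \<le> S (r * n + 1 + k)" if "k < n" for k
  proof -
    have "S (r * n) \<le> S (r * n + 1 + k)" using Smono K1[OF that] by simp
    moreover have "S (r * n) = r * L" using Smult[of r] MN by (simp add: add_mult_distrib)
    moreover have "r \<le> r * L" by (rule rL)
    ultimately show ?thesis by linarith
  qed
  have K4: "S (r * n + 1 + k + n) = S (r * n + 1 + k) + L \<and> V (r * n + 1 + k + n) = V (r * n + 1 + k)"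
    if "k < n" for k
    using Sshift[of "r * n + 1 + k" 1] K1[OF that] by simp
  have uV: "vlab G (V (r * n + 1 + k)) = u" if "k \<in> Vis" for k
    using that K2 by (simp add: Vis_def u_def)
  have sub: "f ` Vis \<subseteq> Occ"
  proof
    fix i assume "i \<in> f ` Vis"
    then obtain k where k: "k \<in> Vis" "i = f k" by blast
    have kn: "k < n" using k by (simp add: Vis_def)
    let ?c = "r * n + 1 + k"
    have take_u: "take (length u) (drop (S ?c) T) = u" using SL[of ?c] uV[OF k(1)] by simp
    have bound: "S ?c + length u \<le> length T" using SE[of ?c] uV[OF k(1)] EpT[of ?c] K1[OF kn] by simp
    have r3: "r \<le> S ?c" using K3[OF kn] .
    have "cyc_word x (i + j) = u ! j" if j: "j < length u" for j
    proof -
      have "u ! j = take (length u) (drop (S ?c) T) ! j" using take_u by simp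
      also have "\<dots> = T ! (S ?c + j)" using j bound by simp
      also have "S ?c + j = r + (S ?c - r + j)" using r3 by simp
      also have "T ! (r + (S ?c - r + j)) = x ! ((S ?c - r + j) mod L)"
        using Tn[of "S ?c - r + j"] bound j TL r3 by simp
      also have "(S ?c - r + j) mod L = ((S ?c - r) mod L + j) mod L" by (simp add: mod_add_left_eq)
      finally show ?thesis using k(2) by (simp add: f_def cyc_word_def)
    qed
    moreover have "i < L" using k(2) L_pos by (simp add: f_def)
    ultimately show "i \<in> Occ" by (simp add: Occ_def)
  qed
  have noninj: "f k1 \<noteq> f k2" if k12: "k1 \<in> Vis" "k2 \<in> Vis" "k1 < k2" for k1 k2
  proof
    assume feq: "f k1 = f k2"
    let ?c1 = "r * n + 1 + k1" and ?c2 = "r * n + 1 + k2"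
    have k1n: "k1 < n" and k2n: "k2 < n" using k12 by (auto simp: Vis_def)
    have c12: "?c1 < ?c2" "?c2 < ?c1 + n" "?c1 + n \<le> N" using k12 k2n K1[OF k1n] by auto
    have s12: "S ?c1 \<le> S ?c2" using Smono c12 by simp
    have s21: "S ?c2 \<le> S ?c1 + L" using Smono[of ?c2 "?c1 + n"] c12 K4[OF k1n] by simp
    have r1: "r \<le> S ?c1" using K3[OF k1n] .
    have md: "(S ?c2 - r) mod L = (S ?c1 - r) mod L" using feq by (simp add: f_def)
    have "L dvd (S ?c2 - r) - (S ?c1 - r)"
      using md mod_eq_dvd_iff_nat[of "S ?c1 - r" "S ?c2 - r" L] s12 r1 by simp
    then obtain c where c: "(S ?c2 - r) - (S ?c1 - r) = L * c" by (auto simp: dvd_def)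
    have "L * c \<le> L" using c s21 s12 r1 by linarith
    then have "c \<le> 1" using L_pos by simp
    then have "c = 0 \<or> c = 1" by auto
    then show False
    proof
      assume "c = 0"
      then have "S ?c1 = S ?c2" using c s12 r1 by simp
      moreover have "Ep ?c1 = Ep ?c2" using SE[of ?c1] SE[of ?c2] uV k12 calculation by simp
      ultimately show False using no_zero_progress[OF ag wQ, of ?c1 ?c2] c12 by (simp add: S_def Ep_def)
    next
      assume "c = 1"
      then have "S ?c2 = S (?c1 + n)" using c s12 r1 K4[OF k1n] by simp
      moreover have "V (?c1 + n) = V ?c2" using K4[OF k1n] uV k12 K2 k1n k2n by (simp add: Vis_def)
      moreover have "Ep ?c2 = Ep (?c1 + n)" using SE[of ?c2] SE[of "?c1 + n"] calculation by simp
      ultimately show False using no_zero_progress[OF ag wQ, of ?c2 "?c1 + n"] c12 by (simp add: S_def Ep_def)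
    qed
  qed
  have inj: "inj_on f Vis"
  proof (rule inj_onI)
    fix a b assume ab: "a \<in> Vis" "b \<in> Vis" "f a = f b"
    show "a = b"
    proof (rule ccontr)
      assume "a \<noteq> b"
      then have "a < b \<or> b < a" by auto
      then show False using noninj ab by metis
    qed
  qed
  have sup: "Occ \<subseteq> f ` Vis"
  proof
    fix i assume iO: "i \<in> Occ"
    then have iL: "i < L" and iocc: "\<And>j. j < length u \<Longrightarrow> cyc_word x (i + j) = u ! j"
      by (auto simp: Occ_def)
    define s where "s = r + (r + 2) * L + i"
    have hML: "M * L = r * L + length u * L + 3 * L" by (simp add: M_def algebra_simps)
    have uL: "length u \<le> length u * L" using L1 by simp
    have r1L: "(r + 2) * L = r * L + 2 * L" by simp
    have sl: "s + length u < length T" using TL hML iL uL r1L unfolding s_def by linarith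
    have occ: "take (length u) (drop s T) = u"
    proof (rule nth_equalityI)
      show "length (take (length u) (drop s T)) = length u" using sl by simp
    next
      fix j assume "j < length (take (length u) (drop s T))"
      then have j: "j < length u" by simp
      have "take (length u) (drop s T) ! j = T ! (r + ((r + 2) * L + i + j))"
        using j sl by (simp add: s_def add.assoc)
      also have "\<dots> = x ! (((r + 2) * L + i + j) mod L)"
        using Tn[of "(r + 2) * L + i + j"] sl j by (simp add: s_def TL)
      also have "((r + 2) * L + i + j) mod L = (i + j) mod L" by (simp add: add.assoc)
      also have "x ! ((i + j) mod L) = u ! j" using iocc[OF j] by (simp add: cyc_word_def)
      finally show "take (length u) (drop s T) ! j = u ! j" .
    qed
    have wv: "is_walk G v []" using vV by simp
    have s0: "0 < s" using L1 r1L unfolding s_def by linarith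
    have sl': "s + length (walk_label G v []) < length (walk_label G v0 (pre N))" using sl by (simp add: T_def u_def)
    have occ': "take (length (walk_label G v [])) (drop s (walk_label G v0 (pre N))) = walk_label G v []"
      using occ by (simp add: T_def u_def)
    obtain c where c: "c \<le> N" "S c = s" "V c = v"
      using position[OF nr wQ wv s0 sl' occ'] by (auto simp: S_def V_def)
    have cgt: "(r + 1) * n < c"
    proof (rule ccontr)
      assume "\<not> (r + 1) * n < c"
      then have "S c \<le> S ((r + 1) * n)" using Smono[of c "(r + 1) * n"] MN by simp
      also have "\<dots> = (r + 1) * L" using Smult[of "r + 1"] MN by simp
      moreover have "(r + 2) * L = (r + 1) * L + L" by simp
      ultimately show False using c(2) L1 unfolding s_def by linarith
    qed
    define k where "k = (c - 1) mod n"
    define q where "q = (c - 1) div n - r"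
    have kn: "k < n" using n0 by (simp add: k_def)
    have dq: "r \<le> (c - 1) div n"
    proof -
      have "(r + 1) * n \<le> c - 1" using cgt by simp
      then have "((r + 1) * n) div n \<le> (c - 1) div n" by (rule div_le_mono)
      then show ?thesis using n0 by simp
    qed
    have ceq: "c = (r * n + 1 + k) + q * n"
    proof -
      have "c - 1 = ((c - 1) div n) * n + k" using div_mult_mod_eq[of "c - 1" n] by (simp add: k_def)
      also have "(c - 1) div n = r + q" using dq by (simp add: q_def)
      finally show ?thesis using cgt by (simp add: algebra_simps)
    qed
    have sh: "S c = S (r * n + 1 + k) + q * L" using Sshift[of "r * n + 1 + k" q] c(1) ceq by simp
    have "V c = tgt G (es ! k)" using Vt[of c] c(1) cgt by (simp add: k_def)
    then have kV: "k \<in> Vis" using c(3) kn by (simp add: Vis_def)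
    have r3: "r \<le> S (r * n + 1 + k)" using K3[OF kn] .
    have "(S (r * n + 1 + k) - r) + q * L = (r + 2) * L + i" using sh c(2) r3 by (simp add: s_def)
    then have "((S (r * n + 1 + k) - r) + q * L) mod L = ((r + 2) * L + i) mod L" by simp
    moreover have "((r + 2) * L + i) mod L = i"
    proof -
      have "((r + 2) * L + i) mod L = i mod L" by (metis mod_mult_self3)
      then show ?thesis using iL by simp
    qed
    moreover have "((S (r * n + 1 + k) - r) + q * L) mod L = (S (r * n + 1 + k) - r) mod L" by simp
    ultimately have "f k = i" by (simp add: f_def)
    then show "i \<in> f ` Vis" using kV by blast
  qed
  have "bij_betw f Vis Occ" using inj sub sup by (auto simp: bij_betw_def)
  then have "card Vis = card Occ" by (rule bij_betw_same_card)
  moreover have "vertex_occurrences G v0 es v = card Vis"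
    by (simp add: vertex_occurrences_def length_filter_conv_card Vis_def n_def)
  moreover have "cyc_occurrences (vlab G v) x = card Occ"
    by (simp add: cyc_occurrences_def period_eq Occ_def u_def)
  ultimately show ?thesis by simp
qed

end


theorem theorem1:
  fixes G :: "('v, 'e, 'a::finite) agraph"
  assumes "non_redundant G"
    and "is_circuit G v0 es"
    and "v \<in> verts G"
  shows "vertex_occurrences G v0 es v = cyc_occurrences (vlab G v) (circuit_word G v0 es)"
proof -
  interpret circ_ctx G v0 es using assms(1,2) by unfold_locales
  show ?thesis using main[OF assms(3)] .
qed

end
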